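(* Let $\alpha_1,\dots,\alpha_m,\beta_1,\dots,\beta_n$ be indeterminates, let $a_0=1$, $a_k=\sum_{1\le i_1<\dots<i_k\le m}\alpha_{i_1}\cdots\alpha_{i_k}$ ($1\le k\le m$), $b_0=1$, $b_k=\sum_{1\le j_1<\dots<j_k\le n}\beta_{j_1}\cdots\beta_{j_k}$ ($1\le k\le n$), and let $\mathbf{S}=\operatorname{per}(M)\in\mathbb{Z}[\alpha,\beta]$ where $M$ is the $(m+n)\times(m+n)$ matrix whose row $j$ ($1\le j\le n$) has $a_k$ in column $j+k$ ($0\le k\le m$) and $0$ elsewhere, and whose row $n+i$ ($1\le i\le m$) has $b_k$ in column $i+k$ ($0\le k\le n$) and $0$ elsewhere. Then a monomial $\alpha^\mu\beta^\nu$ has nonzero coefficient in $\mathbf{S}$ if and only if it has a syl-representation. (Indeed $\mathbf{S}=\sum_{\mathcal{S}_1,\mathcal{S}_2\in\{0,1\}^{m\times n},\ PC(\mathcal{S}_1,\mathcal{S}_2)}\alpha^{rs(\mathcal{S}_1)}\beta^{cs(\mathcal{S}_2)}$.)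
   Context: For $M\in\{0,1\}^{m\times n}$: $rs(M)=(\sum_j M_{ij})_{i=1..m}$, $cs(M)=(\sum_i M_{ij})_{j=1..n}$, adjusted row sum $ars(M)=(i+\sum_j M_{ij})_{i=1..m}$, adjusted column sum $acs(M)=(j+\sum_i M_{ij})_{j=1..n}$. For $\mathcal{S}_1,\mathcal{S}_2\in\{0,1\}^{m\times n}$, they are properly coupled, written $PC(\mathcal{S}_1,\mathcal{S}_2)$, iff $\{c'_1,\dots,c'_n,r'_1,\dots,r'_m\}=\{1,\dots,m+n\}$ where $c'=acs(\mathcal{S}_1)$ and $r'=ars(\mathcal{S}_2)$. A syl-representation of the term $\alpha^\mu\beta^\nu$ is a pair $(\mathcal{S}_1,\mathcal{S}_2)$ of matrices in $\{0,1\}^{m\times n}$ with $rs(\mathcal{S}_1)=\mu$, $cs(\mathcal{S}_2)=\nu$ and $PC(\mathcal{S}_1,\mathcal{S}_2)$. *)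

theory Defs
  imports Main "HOL-Library.Poly_Mapping" "HOL-Combinatorics.Permutations"
begin

(* Polynomials in Z[alpha, beta]: variables Inl i = alpha_i, Inr j = beta_j;
   a polynomial is a finitely supported map from monomials (exponent maps) to int. *)
type_synonym var = "nat + nat"
type_synonym mon = "var \<Rightarrow>\<^sub>0 nat"
type_synonym zpoly = "mon \<Rightarrow>\<^sub>0 int"

definition Var :: "var \<Rightarrow> zpoly" where
  "Var v = Poly_Mapping.single (Poly_Mapping.single v 1) 1"

definition coeff :: "zpoly \<Rightarrow> mon \<Rightarrow> int" where
  "coeff p t = Poly_Mapping.lookup p t"

definition a_el :: "nat \<Rightarrow> nat \<Rightarrow> zpoly" where
  "a_el m k = (\<Sum>I\<in>{I. I \<subseteq> {1..m} \<and> card I = k}. \<Prod>i\<in>I. Var (Inl i))"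

definition b_el :: "nat \<Rightarrow> nat \<Rightarrow> zpoly" where
  "b_el n k = (\<Sum>J\<in>{J. J \<subseteq> {1..n} \<and> card J = k}. \<Prod>j\<in>J. Var (Inr j))"

definition per :: "nat \<Rightarrow> (nat \<Rightarrow> nat \<Rightarrow> 'a::comm_semiring_1) \<Rightarrow> 'a" where
  "per N M = (\<Sum>\<sigma>\<in>{\<sigma>. \<sigma> permutes {1..N}}. \<Prod>r\<in>{1..N}. M r (\<sigma> r))"

definition syl_matrix :: "nat \<Rightarrow> nat \<Rightarrow> nat \<Rightarrow> nat \<Rightarrow> zpoly" where
  "syl_matrix m n r c =
     (if 1 \<le> r \<and> r \<le> n then (if r \<le> c \<and> c - r \<le> m then a_el m (c - r) else 0)
      else if n < r \<and> r \<le> n + m then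
        (let i = r - n in if i \<le> c \<and> c - i \<le> n then b_el n (c - i) else 0)
      else 0)"

definition S_poly :: "nat \<Rightarrow> nat \<Rightarrow> zpoly" where
  "S_poly m n = per (m + n) (syl_matrix m n)"

definition syl_mono :: "nat \<Rightarrow> nat \<Rightarrow> (nat \<Rightarrow> nat) \<Rightarrow> (nat \<Rightarrow> nat) \<Rightarrow> mon" where
  "syl_mono m n \<mu> \<nu> = (\<Sum>i=1..m. Poly_Mapping.single (Inl i) (\<mu> i))
                     + (\<Sum>j=1..n. Poly_Mapping.single (Inr j) (\<nu> j))"

definition is01 :: "nat \<Rightarrow> nat \<Rightarrow> (nat \<Rightarrow> nat \<Rightarrow> nat) \<Rightarrow> bool" where
  "is01 m n S \<longleftrightarrow> (\<forall>i\<in>{1..m}. \<forall>j\<in>{1..n}. S i j \<in> {0, 1})"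

definition rs :: "nat \<Rightarrow> (nat \<Rightarrow> nat \<Rightarrow> nat) \<Rightarrow> nat \<Rightarrow> nat" where
  "rs n S i = (\<Sum>j=1..n. S i j)"

definition cs :: "nat \<Rightarrow> (nat \<Rightarrow> nat \<Rightarrow> nat) \<Rightarrow> nat \<Rightarrow> nat" where
  "cs m S j = (\<Sum>i=1..m. S i j)"

definition ars :: "nat \<Rightarrow> (nat \<Rightarrow> nat \<Rightarrow> nat) \<Rightarrow> nat \<Rightarrow> nat" where
  "ars n S i = i + rs n S i"

definition acs :: "nat \<Rightarrow> (nat \<Rightarrow> nat \<Rightarrow> nat) \<Rightarrow> nat \<Rightarrow> nat" where
  "acs m S j = j + cs m S j"

definition PC :: "nat \<Rightarrow> nat \<Rightarrow> (nat \<Rightarrow> nat \<Rightarrow> nat) \<Rightarrow> (nat \<Rightarrow> nat \<Rightarrow> nat) \<Rightarrow> bool" where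
  "PC m n S1 S2 \<longleftrightarrow> acs m S1 ` {1..n} \<union> ars n S2 ` {1..m} = {1..m+n}"

definition syl_rep :: "nat \<Rightarrow> nat \<Rightarrow> (nat \<Rightarrow> nat) \<Rightarrow> (nat \<Rightarrow> nat)
    \<Rightarrow> (nat \<Rightarrow> nat \<Rightarrow> nat) \<Rightarrow> (nat \<Rightarrow> nat \<Rightarrow> nat) \<Rightarrow> bool" where
  "syl_rep m n \<mu> \<nu> S1 S2 \<longleftrightarrow> is01 m n S1 \<and> is01 m n S2
     \<and> (\<forall>i\<in>{1..m}. rs n S1 i = \<mu> i) \<and> (\<forall>j\<in>{1..n}. cs m S2 j = \<nu> j)
     \<and> PC m n S1 S2"

end

theory Submission
  imports Defs
begin

definition nonneg :: "zpoly \<Rightarrow> bool" where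
  "nonneg p \<longleftrightarrow> (\<forall>t. Poly_Mapping.lookup p t \<ge> 0)"

lemma Sum_any_nonneg_int:
  fixes h :: "'b \<Rightarrow> int"
  assumes "finite K" "\<And>x. x \<notin> K \<Longrightarrow> h x = 0" "\<And>x. h x \<ge> 0"
  shows "Sum_any h = sum h K"
  using assms by (intro Sum_any.expand_superset) auto

lemma mult_lookup_ge:
  assumes "nonneg f" "nonneg g"
  shows "Poly_Mapping.lookup (f*g) k \<ge> 0"
    and "k = a + b \<Longrightarrow> Poly_Mapping.lookup (f*g) k \<ge> Poly_Mapping.lookup f a * Poly_Mapping.lookup g b"
proof -
  define G where "G l = (\<Sum>q. Poly_Mapping.lookup g q when k = l + q)" for l
  have G: "G l = (\<Sum>q\<in>Poly_Mapping.keys g. Poly_Mapping.lookup g q when k = l + q)" for l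
    unfolding G_def
    by (rule Sum_any.expand_superset) (auto simp: in_keys_iff)
  have Gnn: "G l \<ge> 0" for l
    unfolding G using assms(2) by (auto simp: nonneg_def when_def intro!: sum_nonneg)
  have L: "Poly_Mapping.lookup (f*g) k = (\<Sum>l\<in>Poly_Mapping.keys f. Poly_Mapping.lookup f l * G l)"
    unfolding lookup_mult G_def[symmetric]
    by (rule Sum_any.expand_superset) (auto simp: in_keys_iff)
  show "Poly_Mapping.lookup (f*g) k \<ge> 0"
    unfolding L using assms(1) Gnn by (auto simp: nonneg_def intro!: sum_nonneg)
  assume k: "k = a + b"
  have Ga: "G a \<ge> Poly_Mapping.lookup g b"
  proof (cases "b \<in> Poly_Mapping.keys g")
    case True
    have "Poly_Mapping.lookup g b = (Poly_Mapping.lookup g b when k = a + b)" using k by simp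
    also have "\<dots> \<le> G a" unfolding G
      by (rule member_le_sum[OF True]) (use assms(2) in \<open>auto simp: nonneg_def when_def\<close>)
    finally show ?thesis .
  next
    case False then show ?thesis using Gnn by (simp add: in_keys_iff)
  qed
  show "Poly_Mapping.lookup (f*g) k \<ge> Poly_Mapping.lookup f a * Poly_Mapping.lookup g b"
  proof (cases "a \<in> Poly_Mapping.keys f")
    case True
    have "Poly_Mapping.lookup f a * Poly_Mapping.lookup g b \<le> Poly_Mapping.lookup f a * G a"
      using Ga assms(1) by (simp add: nonneg_def mult_left_mono)
    also have "\<dots> \<le> Poly_Mapping.lookup (f*g) k" unfolding L
      by (rule member_le_sum[OF True]) (use assms(1) Gnn in \<open>auto simp: nonneg_def\<close>)
    finally show ?thesis .
  next
    case False
    then show ?thesis using \<open>Poly_Mapping.lookup (f*g) k \<ge> 0\<close> by (simp add: in_keys_iff)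
  qed
qed

lemma nonneg_mult: "nonneg f \<Longrightarrow> nonneg g \<Longrightarrow> nonneg (f*g)"
  using mult_lookup_ge(1) nonneg_def by blast

lemma nonneg_add: "nonneg f \<Longrightarrow> nonneg g \<Longrightarrow> nonneg (f+g)"
  by (simp add: nonneg_def lookup_add)

lemma nonneg_sum: "(\<And>x. x \<in> A \<Longrightarrow> nonneg (f x)) \<Longrightarrow> nonneg (sum f A)"
  by (induction A rule: infinite_finite_induct) (auto simp: nonneg_def lookup_add)

lemma nonneg_one: "nonneg 1"
  by (simp add: nonneg_def lookup_one when_def)

lemma nonneg_prod: "(\<And>x. x \<in> A \<Longrightarrow> nonneg (f x)) \<Longrightarrow> nonneg (prod f A)"
  by (induction A rule: infinite_finite_induct) (auto simp: nonneg_mult nonneg_one)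

lemma keys_add_nonneg: "nonneg f \<Longrightarrow> nonneg g \<Longrightarrow> Poly_Mapping.keys (f+g) = Poly_Mapping.keys f \<union> Poly_Mapping.keys g"
  apply (auto simp: in_keys_iff lookup_add nonneg_def)
  by (metis add_nonneg_eq_0_iff)+

lemma keys_mult_nonneg: "nonneg f \<Longrightarrow> nonneg g \<Longrightarrow> Poly_Mapping.keys (f*g) = {a + b | a b. a \<in> Poly_Mapping.keys f \<and> b \<in> Poly_Mapping.keys g}"
proof (rule equalityI[OF keys_mult], clarify)
  fix a b assume nn: "nonneg f" "nonneg g" and ab: "a \<in> Poly_Mapping.keys f" "b \<in> Poly_Mapping.keys g"
  have "Poly_Mapping.lookup f a * Poly_Mapping.lookup g b > 0" using nn ab
    by (auto simp: nonneg_def in_keys_iff) (smt (verit) mult_pos_pos)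
  with mult_lookup_ge(2)[OF nn refl, of a b] show "a + b \<in> Poly_Mapping.keys (f*g)" by (auto simp: in_keys_iff)
qed

lemma keys_sum_nonneg: "finite A \<Longrightarrow> (\<And>x. x \<in> A \<Longrightarrow> nonneg (f x)) \<Longrightarrow> Poly_Mapping.keys (sum f A) = (\<Union>x\<in>A. Poly_Mapping.keys (f x))"
  by (induction A rule: finite_induct) (auto simp: keys_add_nonneg nonneg_sum)

lemma keys_prod_nonneg:
  "finite A \<Longrightarrow> (\<And>x. x \<in> A \<Longrightarrow> nonneg (f x)) \<Longrightarrow>
   Poly_Mapping.keys (prod f A) = {sum g A | g. \<forall>x\<in>A. g x \<in> Poly_Mapping.keys (f x)}"
proof (induction A rule: finite_induct)
  case empty
  then show ?case by auto
next
  case (insert x A)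
  have "Poly_Mapping.keys (prod f (insert x A)) = {a + b | a b. a \<in> Poly_Mapping.keys (f x) \<and> b \<in> Poly_Mapping.keys (prod f A)}"
    using insert by (simp add: keys_mult_nonneg nonneg_prod)
  also have "\<dots> = {sum g (insert x A) | g. \<forall>y\<in>insert x A. g y \<in> Poly_Mapping.keys (f y)}"
  proof (intro equalityI subsetI)
    fix z assume "z \<in> {a + b | a b. a \<in> Poly_Mapping.keys (f x) \<and> b \<in> Poly_Mapping.keys (prod f A)}"
    then obtain a g where z: "z = a + sum g A" "a \<in> Poly_Mapping.keys (f x)" "\<forall>y\<in>A. g y \<in> Poly_Mapping.keys (f y)"
      using insert by auto
    have "sum (g(x:=a)) A = sum g A" using insert(2) by (intro sum.cong) auto
    then show "z \<in> {sum g (insert x A) | g. \<forall>y\<in>insert x A. g y \<in> Poly_Mapping.keys (f y)}"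
      using z insert(1,2) by (intro CollectI exI[of _ "g(x:=a)"]) auto
  next
    fix z assume "z \<in> {sum g (insert x A) | g. \<forall>y\<in>insert x A. g y \<in> Poly_Mapping.keys (f y)}"
    then obtain g where "z = sum g (insert x A)" "\<forall>y\<in>insert x A. g y \<in> Poly_Mapping.keys (f y)" by auto
    then show "z \<in> {a + b | a b. a \<in> Poly_Mapping.keys (f x) \<and> b \<in> Poly_Mapping.keys (prod f A)}"
      using insert by auto
  qed
  finally show ?case .
qed


definition mA :: "nat set \<Rightarrow> mon" where "mA I = (\<Sum>i\<in>I. Poly_Mapping.single (Inl i) 1)"
definition mB :: "nat set \<Rightarrow> mon" where "mB J = (\<Sum>j\<in>J. Poly_Mapping.single (Inr j) 1)"

lemma lookup_mA: "finite I \<Longrightarrow> Poly_Mapping.lookup (mA I) (Inl i) = (if i \<in> I then 1 else 0)"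
  "Poly_Mapping.lookup (mA I) (Inr j) = 0"
  by (auto simp: mA_def lookup_sum lookup_single when_def)

lemma lookup_mB: "finite J \<Longrightarrow> Poly_Mapping.lookup (mB J) (Inr j) = (if j \<in> J then 1 else 0)"
  "Poly_Mapping.lookup (mB J) (Inl i) = 0"
  by (auto simp: mB_def lookup_sum lookup_single when_def)

lemma prod_single: "(\<Prod>x\<in>A. Poly_Mapping.single (h x) (1::int)) = Poly_Mapping.single (sum h A) 1"
  by (induction A rule: infinite_finite_induct) (auto simp: mult_single)

lemma nonneg_single: "nonneg (Poly_Mapping.single t 1)"
  by (simp add: nonneg_def lookup_single when_def)

lemma a_el_eq: "a_el m k = (\<Sum>I\<in>{I. I \<subseteq> {1..m} \<and> card I = k}. Poly_Mapping.single (mA I) 1)"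
  unfolding a_el_def Var_def mA_def prod_single ..

lemma b_el_eq: "b_el n k = (\<Sum>J\<in>{J. J \<subseteq> {1..n} \<and> card J = k}. Poly_Mapping.single (mB J) 1)"
  unfolding b_el_def Var_def mB_def prod_single ..

lemma fin_subsets: "finite {I. I \<subseteq> {1..(m::nat)} \<and> P I}"
  by (rule finite_subset[of _ "Pow {1..m}"]) auto

lemma keys_a_el: "Poly_Mapping.keys (a_el m k) = mA ` {I. I \<subseteq> {1..m} \<and> card I = k}"
  unfolding a_el_eq by (subst keys_sum_nonneg) (auto simp: fin_subsets nonneg_single)

lemma keys_b_el: "Poly_Mapping.keys (b_el n k) = mB ` {J. J \<subseteq> {1..n} \<and> card J = k}"
  unfolding b_el_eq by (subst keys_sum_nonneg) (auto simp: fin_subsets nonneg_single)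

lemma nonneg_a_el: "nonneg (a_el m k)"
  unfolding a_el_eq by (intro nonneg_sum nonneg_single)

lemma nonneg_b_el: "nonneg (b_el m k)"
  unfolding b_el_eq by (intro nonneg_sum nonneg_single)

lemma nonneg_zero: "nonneg 0" by (simp add: nonneg_def)

lemma nonneg_syl: "nonneg (syl_matrix m n r c)"
  by (simp add: syl_matrix_def Let_def nonneg_a_el nonneg_b_el nonneg_zero)

lemma keys_S: "Poly_Mapping.keys (S_poly m n) =
  (\<Union>\<sigma>\<in>{\<sigma>. \<sigma> permutes {1..m+n}}. {sum g {1..m+n} | g. \<forall>r\<in>{1..m+n}. g r \<in> Poly_Mapping.keys (syl_matrix m n r (\<sigma> r))})"
  unfolding S_poly_def per_def
  by (subst keys_sum_nonneg) (auto simp: finite_permutations nonneg_prod nonneg_syl keys_prod_nonneg)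

lemma card_sub_le: "I \<subseteq> {1..(m::nat)} \<Longrightarrow> card I \<le> m"
  using card_mono[of "{1..m}" I] by simp

lemma card_sub_le': "I \<subseteq> {Suc 0..(m::nat)} \<Longrightarrow> card I \<le> m"
  using card_sub_le by simp

lemma keys_syl_top: assumes "1 \<le> r" "r \<le> n" shows "Poly_Mapping.keys (syl_matrix m n r c) =
   (if r \<le> c then mA ` {I. I \<subseteq> {1..m} \<and> card I = c - r} else {})"
proof (cases "r \<le> c \<and> c - r \<le> m")
  case True
  then show ?thesis using assms by (simp add: syl_matrix_def keys_a_el)
next
  case False
  then have "syl_matrix m n r c = 0" using assms by (auto simp: syl_matrix_def)
  then show ?thesis using False by (auto dest!: card_sub_le')
qed

lemma keys_syl_bot: assumes "n < r" "r \<le> n + m" shows "Poly_Mapping.keys (syl_matrix m n r c) =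
   (if r - n \<le> c then mB ` {J. J \<subseteq> {1..n} \<and> card J = c - (r - n)} else {})"
proof (cases "r - n \<le> c \<and> c - (r - n) \<le> n")
  case True
  then show ?thesis using assms by (simp add: syl_matrix_def keys_b_el Let_def)
next
  case False
  then have "syl_matrix m n r c = 0" using assms by (auto simp: syl_matrix_def Let_def)
  then show ?thesis using False by (auto dest!: card_sub_le')
qed

lemma lookup_syl_mono: "Poly_Mapping.lookup (syl_mono m n \<mu> \<nu>) (Inl i) = (if i \<in> {1..m} then \<mu> i else 0)"
   "Poly_Mapping.lookup (syl_mono m n \<mu> \<nu>) (Inr j) = (if j \<in> {1..n} then \<nu> j else 0)"
  by (auto simp: syl_mono_def lookup_add lookup_sum lookup_single when_def)


lemma sum_ind_card: "A \<subseteq> {1..(m::nat)} \<Longrightarrow> (\<Sum>i=1..m. if i \<in> A then 1 else 0) = (card A :: nat)"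
proof -
  assume A: "A \<subseteq> {1..m}"
  have "(\<Sum>i=1..m. if i \<in> A then 1 else 0) = (\<Sum>i\<in>{1..m} \<inter> A. (1::nat))"
    using sum.inter_restrict[of "{1..m}" "\<lambda>_. (1::nat)" A] by simp
  also have "{1..m} \<inter> A = A" using A by auto
  finally show ?thesis by simp
qed

lemma split_ivl: "{1..m+n} = {1..n} \<union> {n+1..n+(m::nat)}" by auto

lemma lookup_G:
  assumes I: "\<forall>j\<in>{1..n}. I j \<subseteq> {1..m}" and J: "\<forall>i\<in>{1..m}. J i \<subseteq> {1..n}"
  shows "Poly_Mapping.lookup (\<Sum>r=1..m+n. if r \<le> n then mA (I r) else mB (J (r - n))) (Inl i)
           = (\<Sum>j=1..n. if i \<in> I j then 1 else 0)"
    and "Poly_Mapping.lookup (\<Sum>r=1..m+n. if r \<le> n then mA (I r) else mB (J (r - n))) (Inr j)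
           = (\<Sum>i=1..m. if j \<in> J i then 1 else 0)"
proof -
  define G where "G r = (if r \<le> n then mA (I r) else mB (J (r - n)))" for r
  have fI: "finite (I j)" if "j \<in> {1..n}" for j using I that finite_subset by blast
  have fJ: "finite (J i)" if "i \<in> {1..m}" for i using J that finite_subset by blast
  have sp: "sum h {1..m+n} = sum h {1..n} + sum h {n+1..n+m}" for h :: "nat \<Rightarrow> nat"
    unfolding split_ivl by (rule sum.union_disjoint) auto
  have sh: "sum h {n+1..n+m} = (\<Sum>i=1..m. h (n + i))" for h :: "nat \<Rightarrow> nat"
  proof -
    have "sum h {1+n..m+n} = (\<Sum>i=1..m. h (i + n))" by (rule sum.shift_bounds_cl_nat_ivl)
    then show ?thesis by (simp add: add.commute)
  qed
  show "Poly_Mapping.lookup (sum G {1..m+n}) (Inl i) = (\<Sum>j=1..n. if i \<in> I j then 1 else 0)"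
    unfolding lookup_sum sp
    by (auto simp: G_def lookup_mA lookup_mB fI intro!: sum.cong)
  show "Poly_Mapping.lookup (sum G {1..m+n}) (Inr j) = (\<Sum>i=1..m. if j \<in> J i then 1 else 0)"
    unfolding lookup_sum sp sh
    by (auto simp: G_def lookup_mA lookup_mB fJ intro!: sum.cong)
qed


lemma dir1:
  assumes "syl_mono m n \<mu> \<nu> \<in> Poly_Mapping.keys (S_poly m n)"
  shows "\<exists>S1 S2. syl_rep m n \<mu> \<nu> S1 S2"
proof -
  let ?t = "syl_mono m n \<mu> \<nu>"
  obtain \<sigma> g where \<sigma>: "\<sigma> permutes {1..m+n}" and g: "\<forall>r\<in>{1..m+n}. g r \<in> Poly_Mapping.keys (syl_matrix m n r (\<sigma> r))"
    and t: "?t = sum g {1..m+n}"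
    using assms unfolding keys_S by auto
  have "\<forall>r\<in>{1..n}. \<exists>I. I \<subseteq> {1..m} \<and> card I = \<sigma> r - r \<and> r \<le> \<sigma> r \<and> g r = mA I"
  proof
    fix r assume r: "r \<in> {1..n}"
    then have "g r \<in> Poly_Mapping.keys (syl_matrix m n r (\<sigma> r))" using g by auto
    then show "\<exists>I. I \<subseteq> {1..m} \<and> card I = \<sigma> r - r \<and> r \<le> \<sigma> r \<and> g r = mA I"
      using r by (subst (asm) keys_syl_top) (auto split: if_splits)
  qed
  from bchoice[OF this] obtain I where I: "\<forall>r\<in>{1..n}. I r \<subseteq> {1..m} \<and> card (I r) = \<sigma> r - r \<and> r \<le> \<sigma> r \<and> g r = mA (I r)"
    by blast
  have "\<forall>i\<in>{1..m}. \<exists>J. J \<subseteq> {1..n} \<and> card J = \<sigma> (n+i) - i \<and> i \<le> \<sigma> (n+i) \<and> g (n+i) = mB J"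
  proof
    fix i assume i: "i \<in> {1..m}"
    then have "g (n+i) \<in> Poly_Mapping.keys (syl_matrix m n (n+i) (\<sigma> (n+i)))" using g by auto
    then show "\<exists>J. J \<subseteq> {1..n} \<and> card J = \<sigma> (n+i) - i \<and> i \<le> \<sigma> (n+i) \<and> g (n+i) = mB J"
      using i by (subst (asm) keys_syl_bot) (auto split: if_splits)
  qed
  from bchoice[OF this] obtain J where J: "\<forall>i\<in>{1..m}. J i \<subseteq> {1..n} \<and> card (J i) = \<sigma> (n+i) - i \<and> i \<le> \<sigma> (n+i) \<and> g (n+i) = mB (J i)"
    by blast
  have t2: "?t = (\<Sum>r=1..m+n. if r \<le> n then mA (I r) else mB (J (r - n)))"
    unfolding t
  proof (rule sum.cong[OF refl])
    fix r assume r: "r \<in> {1..m+n}"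
    show "g r = (if r \<le> n then mA (I r) else mB (J (r - n)))"
    proof (cases "r \<le> n")
      case True then show ?thesis using I r by auto
    next
      case False
      have rn: "r - n \<in> {1..m}" "n + (r - n) = r" using r False by auto
      then show ?thesis using J[rule_format, OF rn(1)] False by simp
    qed
  qed
  have I': "\<forall>j\<in>{1..n}. I j \<subseteq> {1..m}" and J': "\<forall>i\<in>{1..m}. J i \<subseteq> {1..n}" using I J by auto
  define S1 where "S1 i j = (if i \<in> I j then 1 else 0 :: nat)" for i j
  define S2 where "S2 i j = (if j \<in> J i then 1 else 0 :: nat)" for i j
  have rs1: "rs n S1 i = \<mu> i" if "i \<in> {1..m}" for i
    using lookup_G(1)[OF I' J', of i] that unfolding t2[symmetric] lookup_syl_mono
    by (simp add: rs_def S1_def)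
  have cs2: "cs m S2 j = \<nu> j" if "j \<in> {1..n}" for j
    using lookup_G(2)[OF I' J', of j] that unfolding t2[symmetric] lookup_syl_mono
    by (simp add: cs_def S2_def)
  have acs: "acs m S1 j = \<sigma> j" if "j \<in> {1..n}" for j
    using sum_ind_card[of "I j" m] I that by (simp add: acs_def cs_def S1_def)
  have ars: "ars n S2 i = \<sigma> (n + i)" if "i \<in> {1..m}" for i
    using sum_ind_card[of "J i" n] J that by (simp add: ars_def rs_def S2_def)
  have "acs m S1 ` {1..n} \<union> ars n S2 ` {1..m} = \<sigma> ` {1..n} \<union> (\<lambda>i. \<sigma> (n+i)) ` {1..m}"
  proof -
    have "acs m S1 ` {1..n} = \<sigma> ` {1..n}" by (rule image_cong) (simp_all add: acs)
    moreover have "ars n S2 ` {1..m} = (\<lambda>i. \<sigma> (n+i)) ` {1..m}" by (rule image_cong) (simp_all add: ars)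
    ultimately show ?thesis by simp
  qed
  also have "(\<lambda>i. \<sigma> (n+i)) ` {1..m} = \<sigma> ` {n+1..n+m}"
  proof -
    have "(+) n ` {1..m} = {n+1..n+m}" by (simp add: image_add_atLeastAtMost)
    then show ?thesis by (metis image_image)
  qed
  also have "\<sigma> ` {1..n} \<union> \<sigma> ` {n+1..n+m} = \<sigma> ` {1..m+n}"
    unfolding split_ivl by auto
  also have "\<dots> = {1..m+n}" using permutes_image[OF \<sigma>] .
  finally have PC: "PC m n S1 S2" unfolding PC_def .
  have "syl_rep m n \<mu> \<nu> S1 S2"
    unfolding syl_rep_def using PC rs1 cs2 by (auto simp: is01_def S1_def S2_def)
  then show ?thesis by blast
qed


lemma dir2:
  assumes "syl_rep m n \<mu> \<nu> S1 S2"
  shows "syl_mono m n \<mu> \<nu> \<in> Poly_Mapping.keys (S_poly m n)"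
proof -
  note R = assms[unfolded syl_rep_def is01_def]
  define I where "I j = {i\<in>{1..m}. S1 i j = 1}" for j
  define J where "J i = {j\<in>{1..n}. S2 i j = 1}" for i
  have I': "\<forall>j\<in>{1..n}. I j \<subseteq> {1..m}" and J': "\<forall>i\<in>{1..m}. J i \<subseteq> {1..n}"
    by (auto simp: I_def J_def)
  have S1i: "S1 i j = (if i \<in> I j then 1 else 0)" if "i \<in> {1..m}" "j \<in> {1..n}" for i j
  proof -
    have "S1 i j \<in> {0,1}" using R that by blast
    then show ?thesis using that by (auto simp: I_def)
  qed
  have S2i: "S2 i j = (if j \<in> J i then 1 else 0)" if "i \<in> {1..m}" "j \<in> {1..n}" for i j
  proof -
    have "S2 i j \<in> {0,1}" using R that by blast
    then show ?thesis using that by (auto simp: J_def)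
  qed
  have csI: "cs m S1 j = card (I j)" if "j \<in> {1..n}" for j
  proof -
    have "cs m S1 j = (\<Sum>i=1..m. if i \<in> I j then 1 else 0)"
      unfolding cs_def by (rule sum.cong[OF refl]) (use S1i that in auto)
    then show ?thesis using sum_ind_card[of "I j" m] I' that by simp
  qed
  have rsJ: "rs n S2 i = card (J i)" if "i \<in> {1..m}" for i
  proof -
    have "rs n S2 i = (\<Sum>j=1..n. if j \<in> J i then 1 else 0)"
      unfolding rs_def by (rule sum.cong[OF refl]) (use S2i that in auto)
    then show ?thesis using sum_ind_card[of "J i" n] J' that by simp
  qed
  have rsI: "(\<Sum>j=1..n. if i \<in> I j then 1 else 0) = \<mu> i" if "i \<in> {1..m}" for i
  proof -
    have "(\<Sum>j=1..n. if i \<in> I j then 1 else 0) = rs n S1 i"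
      unfolding rs_def by (rule sum.cong[OF refl]) (use S1i that in auto)
    then show ?thesis using R that by simp
  qed
  have csJ: "(\<Sum>i=1..m. if j \<in> J i then 1 else 0) = \<nu> j" if "j \<in> {1..n}" for j
  proof -
    have "(\<Sum>i=1..m. if j \<in> J i then 1 else 0) = cs m S2 j"
      unfolding cs_def by (rule sum.cong[OF refl]) (use S2i that in auto)
    then show ?thesis using R that by simp
  qed
  define \<sigma> where "\<sigma> r = (if r \<in> {1..n} then acs m S1 r else if r \<in> {n+1..n+m} then ars n S2 (r - n) else r)" for r
  have img: "\<sigma> ` {1..m+n} = {1..m+n}"
  proof -
    have "\<sigma> ` {1..m+n} = \<sigma> ` {1..n} \<union> \<sigma> ` {n+1..n+m}" unfolding split_ivl by auto
    also have "\<sigma> ` {1..n} = acs m S1 ` {1..n}" by (rule image_cong) (auto simp: \<sigma>_def)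
    also have "\<sigma> ` {n+1..n+m} = (\<lambda>r. ars n S2 (r - n)) ` {n+1..n+m}" by (rule image_cong) (auto simp: \<sigma>_def)
    also have "\<dots> = ars n S2 ` ((\<lambda>r. r - n) ` {n+1..n+m})" by (simp add: image_image)
    also have "(\<lambda>r. r - n) ` {n+1..n+m} = {1..m}"
    proof (rule set_eqI)
      fix x show "x \<in> (\<lambda>r. r - n) ` {n+1..n+m} \<longleftrightarrow> x \<in> {1..m}"
        by (auto intro: image_eqI[of _ _ "x + n"])
    qed
    finally show ?thesis using R unfolding PC_def by simp
  qed
  have "card (\<sigma> ` {1..m+n}) = card {1..m+n}" by (simp only: img)
  then have "inj_on \<sigma> {1..m+n}" by (rule eq_card_imp_inj_on[rotated]) simp
  then have "bij_betw \<sigma> {1..m+n} {1..m+n}" using img by (simp add: bij_betw_def)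
  then have perm: "\<sigma> permutes {1..m+n}"
    by (rule bij_imp_permutes) (auto simp: \<sigma>_def)
  define G where "G r = (if r \<le> n then mA (I r) else mB (J (r - n)))" for r
  have inK: "\<forall>r\<in>{1..m+n}. G r \<in> Poly_Mapping.keys (syl_matrix m n r (\<sigma> r))"
  proof
    fix r assume r: "r \<in> {1..m+n}"
    show "G r \<in> Poly_Mapping.keys (syl_matrix m n r (\<sigma> r))"
    proof (cases "r \<le> n")
      case True
      then have s: "\<sigma> r = r + card (I r)" using r csI by (simp add: \<sigma>_def acs_def)
      show ?thesis using True r I' s by (subst keys_syl_top) (auto simp: G_def)
    next
      case False
      then have rn: "r - n \<in> {1..m}" using r by auto
      then have s: "\<sigma> r = (r - n) + card (J (r - n))" using r rsJ False by (simp add: \<sigma>_def ars_def)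
      show ?thesis using False r J' rn s by (subst keys_syl_bot) (auto simp: G_def)
    qed
  qed
  have teq: "syl_mono m n \<mu> \<nu> = sum G {1..m+n}"
  proof (rule poly_mapping_eqI)
    fix v show "Poly_Mapping.lookup (syl_mono m n \<mu> \<nu>) v = Poly_Mapping.lookup (sum G {1..m+n}) v"
    proof (cases v)
      case (Inl i)
      show ?thesis
      proof (cases "i \<in> {1..m}")
        case True then show ?thesis unfolding Inl G_def lookup_G(1)[OF I' J'] lookup_syl_mono using rsI by simp
      next
        case False
        have ni: "i \<notin> I j" if "j \<in> {1..n}" for j using I' False that by blast
        have "(\<Sum>j=1..n. if i \<in> I j then 1 else 0) = (0::nat)" using ni by (intro sum.neutral) auto
        then show ?thesis using False unfolding Inl G_def lookup_G(1)[OF I' J'] lookup_syl_mono by auto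
      qed
    next
      case (Inr j)
      show ?thesis
      proof (cases "j \<in> {1..n}")
        case True then show ?thesis unfolding Inr G_def lookup_G(2)[OF I' J'] lookup_syl_mono using csJ by simp
      next
        case False
        have ni: "j \<notin> J i" if "i \<in> {1..m}" for i using J' False that by blast
        have "(\<Sum>i=1..m. if j \<in> J i then 1 else 0) = (0::nat)" using ni by (intro sum.neutral) auto
        then show ?thesis using False unfolding Inr G_def lookup_G(2)[OF I' J'] lookup_syl_mono by auto
      qed
    qed
  qed
  show ?thesis unfolding keys_S teq using perm inK by blast
qed

theorem mainTheorem3:
  fixes m n :: nat and \<mu> \<nu> :: "nat \<Rightarrow> nat"
  shows "coeff (S_poly m n) (syl_mono m n \<mu> \<nu>) \<noteq> 0
     \<longleftrightarrow> (\<exists>S1 S2. syl_rep m n \<mu> \<nu> S1 S2)"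
  unfolding coeff_def using dir1 dir2 by (auto simp: in_keys_iff)

end
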